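(* Let $R$ be a regular run and let $0\le\alpha<\beta$ be reals with $\alpha+d_{open}<\beta-\Delta_{close}$. If TrackStatus$(x)\neq$ incrossing over the open interval $(\alpha,\beta)$ for every track $x$, then GateStatus = opened over $[\alpha+d_{open},\,\beta-\Delta_{close}]$.
   Context: Setting (evolving algebra for the railroad crossing). States are structures over a vocabulary containing: a finite universe Tracks; the reals and ExtendedReals $=\mathbb{R}\cup\{\infty\}$ with standard $<$ and $+$ ($\infty$ largest); a nullary real-valued symbol $\mathrm{CT}$ (current time); positive real constants $d_{close},d_{open},d_{min},d_{max}$ with $d_{close}<d_{min}\le d_{max}$; a unary function TrackStatus from Tracks to $\{\text{empty},\text{coming},\text{incrossing}\}$; a unary function Deadline from Tracks to ExtendedReals; a nullary Dir with values in $\{\text{open},\text{close}\}$; a nullary GateStatus with values in $\{\text{opened},\text{closed}\}$. Put $W=d_{min}-d_{close}$ and $\Delta_{close}=d_{close}+(d_{max}-d_{min})=d_{max}-W$. For a track $x$, $s(x)$ is the condition [$\mathrm{TrackStatus}(x)=\text{empty}$ or $\mathrm{CT}+d_{open}<\mathrm{Deadline}(x)$], and SafeToOpen is $\forall x\in\mathrm{Tracks}\ s(x)$. The program has two modules (agents). Gate: simultaneously OpenGate "if Dir=open then GateStatus:=opened" and CloseGate "if Dir=close then GateStatus:=closed". Controller: simultaneously, for every track $x$, SetDeadline$(x)$ "if TrackStatus$(x)$=coming and Deadline$(x)=\infty$ then Deadline$(x):=\mathrm{CT}+W$", SignalClose$(x)$ "if $\mathrm{CT}=$Deadline$(x)$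 then Dir:=close", ClearDeadline$(x)$ "if TrackStatus$(x)$=empty and Deadline$(x)<\infty$ then Deadline$(x):=\infty$", together with SignalOpen "if Dir=close and SafeToOpen then Dir:=open". Executing a module means computing all updates it generates in the current state and performing them simultaneously (nothing happens if the update set is inconsistent). A module is enabled at a state if its update set is consistent and contains an update that changes the state. TrackStatus is external (changed only by the environment); Deadline, Dir, GateStatus are internal (changed only by the modules); other symbols are static. Runs: for $t\mapsto R(t)$, $t\in[0,\infty)$, let $\rho(t)$ be the reduct of $R(t)$ without CT. $R$ is a pre-run if all $R(t)$ share a superuniverse, $\mathrm{CT}=t$ in $R(t)$, and for every $\tau>0$ there are $0=t_0<\dots<t_n=\tau$ with $\rho$ constant on each $(t_i,t_{i+1})$. For a term $e$ (free variables fixed), $e_t$ is its value in $R(t)$, $e_{t+}$ (resp. $e_{t-}$, $t>0$) its constant value on some $(t,t+\epsilon)$ (resp. $(t-\epsilon,t)$); likewise $\rho(t\pm)$. $e$ holds over an interval if it holds at each point; $e$ becomes (is set to) $a$ at $t$ if $e_{t-}\ne a=e_t$ or $e_t\neq a=e_{t+}$. A pre-run is a run if (i) whenever $\rho(t+)\neq\rho(t)$, $\rho(t+)$ is the CT-free reduct of the result of executing some modules at $R(t)$ (these agents fire at $t$), with external functions equal in $\rho(t)$ and $\rho(t+)$; (ii) whenever $t>0$ and $\rho(t)\ne\rho(t-)$, they differ only in external functions. An agent is immediate if it fires at every moment it is enabled; bounded if immediate or there is $b>0$ with no interval $(t,t+b)$ over which it is enabled but never fires. Initial states: TrackStatus$(x)$=empty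 and Deadline$(x)=\infty$ for every track $x$. A regular run is a run $R$ with $R(0)$ initial such that: (Train Motion) for each track $x$ there is a finite or infinite sequence $0=t_0<t_1<t_2<\cdots$ (the significant moments of $x$) with TrackStatus$(x)$=empty over each $[t_{3i},t_{3i+1})$, =coming over each $[t_{3i+1},t_{3i+2})$ where $d_{min}\le t_{3i+2}-t_{3i+1}\le d_{max}$, =incrossing over each $[t_{3i+2},t_{3i+3})$, and, if the sequence is finite with last element $t_k$, then $3\mid k$ and TrackStatus$(x)$=empty over $[t_k,\infty)$; (Controller Timing) Controller is immediate; (Gate Timing) Gate is bounded, there is no interval $(t,t+d_{close})$ over which Dir=close and GateStatus=opened both hold, and no interval $(t,t+d_{open})$ over which Dir=open and GateStatus=closed both hold. *)

theory Defs
  imports Main "HOL.Real"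
begin

datatype xreal = Fin real | Infty

fun xlt :: "xreal \<Rightarrow> xreal \<Rightarrow> bool" where
  "xlt (Fin a) (Fin b) = (a < b)"
| "xlt (Fin a) Infty = True"
| "xlt Infty _ = False"

datatype tstat = Empty | Coming | Incrossing
datatype dirv = DOpen | DClose
datatype gstat = Opened | Closed

text \<open>CT-free part of a state (the static symbols are parameters, CT is the time).\<close>
record 'trk st =
  TS  :: "'trk \<Rightarrow> tstat"
  DL  :: "'trk \<Rightarrow> xreal"
  Dir :: dirv
  GS  :: gstat

datatype 'trk upd = UDeadline 'trk xreal | UDir dirv | UGate gstat

datatype module = GateM | ControllerM

text \<open>Parameters: dc = d_close, dop = d_open, dmin = d_min, dmax = d_max.\<close>

definition Wd :: "real \<Rightarrow> real \<Rightarrow> real" where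
  "Wd dc dmin = dmin - dc"

definition Delta_close :: "real \<Rightarrow> real \<Rightarrow> real \<Rightarrow> real" where
  "Delta_close dc dmin dmax = dc + (dmax - dmin)"

definition safe_to_open :: "'trk set \<Rightarrow> real \<Rightarrow> 'trk st \<Rightarrow> real \<Rightarrow> bool" where
  "safe_to_open Trk dop s ct =
     (\<forall>x\<in>Trk. TS s x = Empty \<or> xlt (Fin (ct + dop)) (DL s x))"

definition gate_updates :: "'trk st \<Rightarrow> 'trk upd set" where
  "gate_updates s =
     (if Dir s = DOpen then {UGate Opened} else {}) \<union>
     (if Dir s = DClose then {UGate Closed} else {})"

definition ctrl_updates ::
  "'trk set \<Rightarrow> real \<Rightarrow> real \<Rightarrow> real \<Rightarrow> 'trk st \<Rightarrow> real \<Rightarrow> 'trk upd set" where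
  "ctrl_updates Trk dc dop dmin s ct =
     {UDeadline x (Fin (ct + Wd dc dmin)) | x. x \<in> Trk \<and> TS s x = Coming \<and> DL s x = Infty}
     \<union> {UDir DClose | x. x \<in> Trk \<and> Fin ct = DL s x}
     \<union> {UDeadline x Infty | x. x \<in> Trk \<and> TS s x = Empty \<and> xlt (DL s x) Infty}
     \<union> (if Dir s = DClose \<and> safe_to_open Trk dop s ct then {UDir DOpen} else {})"

definition updates ::
  "'trk set \<Rightarrow> real \<Rightarrow> real \<Rightarrow> real \<Rightarrow> module \<Rightarrow> 'trk st \<Rightarrow> real \<Rightarrow> 'trk upd set" where
  "updates Trk dc dop dmin m s ct =
     (case m of GateM \<Rightarrow> gate_updates s | ControllerM \<Rightarrow> ctrl_updates Trk dc dop dmin s ct)"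

definition consistent :: "'trk upd set \<Rightarrow> bool" where
  "consistent U =
     ((\<forall>x a b. UDeadline x a \<in> U \<and> UDeadline x b \<in> U \<longrightarrow> a = b) \<and>
      (\<forall>a b. UDir a \<in> U \<and> UDir b \<in> U \<longrightarrow> a = b) \<and>
      (\<forall>a b. UGate a \<in> U \<and> UGate b \<in> U \<longrightarrow> a = b))"

definition apply_upd :: "'trk upd set \<Rightarrow> 'trk st \<Rightarrow> 'trk st" where
  "apply_upd U s =
     s\<lparr> DL := (\<lambda>x. if \<exists>v. UDeadline x v \<in> U then (THE v. UDeadline x v \<in> U) else DL s x),
        Dir := (if \<exists>v. UDir v \<in> U then (THE v. UDir v \<in> U) else Dir s),
        GS := (if \<exists>v. UGate v \<in> U then (THE v. UGate v \<in> U) else GS s) \<rparr>"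

definition exec_modules ::
  "'trk set \<Rightarrow> real \<Rightarrow> real \<Rightarrow> real \<Rightarrow> module set \<Rightarrow> 'trk st \<Rightarrow> real \<Rightarrow> 'trk st" where
  "exec_modules Trk dc dop dmin M s ct =
     apply_upd (\<Union>m\<in>{m \<in> M. consistent (updates Trk dc dop dmin m s ct)}.
                  updates Trk dc dop dmin m s ct) s"

definition changes :: "'trk upd \<Rightarrow> 'trk st \<Rightarrow> bool" where
  "changes u s = (case u of UDeadline x v \<Rightarrow> DL s x \<noteq> v
                          | UDir v \<Rightarrow> Dir s \<noteq> v
                          | UGate v \<Rightarrow> GS s \<noteq> v)"

definition enabled ::
  "'trk set \<Rightarrow> real \<Rightarrow> real \<Rightarrow> real \<Rightarrow> module \<Rightarrow> 'trk st \<Rightarrow> real \<Rightarrow> bool" where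
  "enabled Trk dc dop dmin m s ct =
     (consistent (updates Trk dc dop dmin m s ct) \<and>
      (\<exists>u \<in> updates Trk dc dop dmin m s ct. changes u s))"

text \<open>A pre-run is given by its CT-free reducts \<rho> t (t \<ge> 0); CT = t in R(t).\<close>
definition pre_run :: "(real \<Rightarrow> 'trk st) \<Rightarrow> bool" where
  "pre_run \<rho> =
     (\<forall>\<tau>>0. \<exists>ts :: real list. ts \<noteq> [] \<and> sorted_wrt (<) ts \<and> hd ts = 0 \<and> last ts = \<tau> \<and>
        (\<forall>i. Suc i < length ts \<longrightarrow>
           (\<forall>u \<in> {ts!i<..<ts!Suc i}. \<forall>v \<in> {ts!i<..<ts!Suc i}. \<rho> u = \<rho> v)))"

definition rplus :: "(real \<Rightarrow> 'trk st) \<Rightarrow> real \<Rightarrow> 'trk st" where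
  "rplus \<rho> t = (THE s. \<exists>\<epsilon>>0. \<forall>u \<in> {t<..<t+\<epsilon>}. \<rho> u = s)"

definition rminus :: "(real \<Rightarrow> 'trk st) \<Rightarrow> real \<Rightarrow> 'trk st" where
  "rminus \<rho> t = (THE s. \<exists>\<epsilon>>0. \<forall>u \<in> {t-\<epsilon><..<t}. \<rho> u = s)"

definition same_internal :: "'trk st \<Rightarrow> 'trk st \<Rightarrow> bool" where
  "same_internal s s' = (DL s = DL s' \<and> Dir s = Dir s' \<and> GS s = GS s')"

definition is_run ::
  "'trk set \<Rightarrow> real \<Rightarrow> real \<Rightarrow> real \<Rightarrow> (real \<Rightarrow> 'trk st) \<Rightarrow> bool" where
  "is_run Trk dc dop dmin \<rho> =
     (pre_run \<rho> \<and>
      (\<forall>t\<ge>0. rplus \<rho> t \<noteq> \<rho> t \<longrightarrow>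
         (\<exists>M. rplus \<rho> t = exec_modules Trk dc dop dmin M (\<rho> t) t) \<and>
         TS (rplus \<rho> t) = TS (\<rho> t)) \<and>
      (\<forall>t>0. \<rho> t \<noteq> rminus \<rho> t \<longrightarrow> same_internal (\<rho> t) (rminus \<rho> t)))"

definition fires ::
  "'trk set \<Rightarrow> real \<Rightarrow> real \<Rightarrow> real \<Rightarrow> (real \<Rightarrow> 'trk st) \<Rightarrow> module \<Rightarrow> real \<Rightarrow> bool" where
  "fires Trk dc dop dmin \<rho> m t =
     (rplus \<rho> t \<noteq> \<rho> t \<and>
      (\<exists>M. m \<in> M \<and> rplus \<rho> t = exec_modules Trk dc dop dmin M (\<rho> t) t \<and>
           TS (rplus \<rho> t) = TS (\<rho> t)))"

definition immediate ::
  "'trk set \<Rightarrow> real \<Rightarrow> real \<Rightarrow> real \<Rightarrow> (real \<Rightarrow> 'trk st) \<Rightarrow> module \<Rightarrow> bool" where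
  "immediate Trk dc dop dmin \<rho> m =
     (\<forall>t\<ge>0. enabled Trk dc dop dmin m (\<rho> t) t \<longrightarrow> fires Trk dc dop dmin \<rho> m t)"

definition bounded ::
  "'trk set \<Rightarrow> real \<Rightarrow> real \<Rightarrow> real \<Rightarrow> (real \<Rightarrow> 'trk st) \<Rightarrow> module \<Rightarrow> bool" where
  "bounded Trk dc dop dmin \<rho> m =
     (immediate Trk dc dop dmin \<rho> m \<or>
      (\<exists>b>0. \<not> (\<exists>t\<ge>0. (\<forall>u \<in> {t<..<t+b}. enabled Trk dc dop dmin m (\<rho> u) u) \<and>
                        (\<forall>u \<in> {t<..<t+b}. \<not> fires Trk dc dop dmin \<rho> m u))))"

definition initial_state :: "'trk set \<Rightarrow> 'trk st \<Rightarrow> bool" where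
  "initial_state Trk s = (\<forall>x\<in>Trk. TS s x = Empty \<and> DL s x = Infty)"

definition motion_segment ::
  "real \<Rightarrow> real \<Rightarrow> (real \<Rightarrow> 'trk st) \<Rightarrow> 'trk \<Rightarrow> (nat \<Rightarrow> real) \<Rightarrow> nat \<Rightarrow> bool" where
  "motion_segment dmin dmax \<rho> x tm i =
     ((\<forall>u \<in> {tm (3*i)..<tm (3*i+1)}. TS (\<rho> u) x = Empty) \<and>
      (\<forall>u \<in> {tm (3*i+1)..<tm (3*i+2)}. TS (\<rho> u) x = Coming) \<and>
      dmin \<le> tm (3*i+2) - tm (3*i+1) \<and> tm (3*i+2) - tm (3*i+1) \<le> dmax \<and>
      (\<forall>u \<in> {tm (3*i+2)..<tm (3*i+3)}. TS (\<rho> u) x = Incrossing))"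

definition train_motion :: "real \<Rightarrow> real \<Rightarrow> (real \<Rightarrow> 'trk st) \<Rightarrow> 'trk \<Rightarrow> bool" where
  "train_motion dmin dmax \<rho> x =
     ((\<exists>tm :: nat \<Rightarrow> real. tm 0 = 0 \<and> strict_mono tm \<and>
         (\<forall>i. motion_segment dmin dmax \<rho> x tm i)) \<or>
      (\<exists>(tm :: nat \<Rightarrow> real) k. tm 0 = 0 \<and> (\<forall>i<k. tm i < tm (Suc i)) \<and> 3 dvd k \<and>
         (\<forall>i. 3*i+3 \<le> k \<longrightarrow> motion_segment dmin dmax \<rho> x tm i) \<and>
         (\<forall>u\<ge>tm k. TS (\<rho> u) x = Empty)))"

definition gate_timing ::
  "'trk set \<Rightarrow> real \<Rightarrow> real \<Rightarrow> real \<Rightarrow> (real \<Rightarrow> 'trk st) \<Rightarrow> bool" where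
  "gate_timing Trk dc dop dmin \<rho> =
     (bounded Trk dc dop dmin \<rho> GateM \<and>
      \<not> (\<exists>t\<ge>0. \<forall>u \<in> {t<..<t+dc}. Dir (\<rho> u) = DClose \<and> GS (\<rho> u) = Opened) \<and>
      \<not> (\<exists>t\<ge>0. \<forall>u \<in> {t<..<t+dop}. Dir (\<rho> u) = DOpen \<and> GS (\<rho> u) = Closed))"

definition regular_run ::
  "'trk set \<Rightarrow> real \<Rightarrow> real \<Rightarrow> real \<Rightarrow> real \<Rightarrow> (real \<Rightarrow> 'trk st) \<Rightarrow> bool" where
  "regular_run Trk dc dop dmin dmax \<rho> =
     (is_run Trk dc dop dmin \<rho> \<and> initial_state Trk (\<rho> 0) \<and>
      (\<forall>x\<in>Trk. train_motion dmin dmax \<rho> x) \<and>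
      immediate Trk dc dop dmin \<rho> ControllerM \<and>
      gate_timing Trk dc dop dmin \<rho>)"

end

theory Submission
  imports Defs
begin

lemma sorted_idx_le:
  fixes ts :: "real list"
  assumes "sorted_wrt (<) ts" "ts \<noteq> []" "hd ts \<le> t" "t < last ts"
  shows "\<exists>i. Suc i < length ts \<and> ts!i \<le> t \<and> t < ts!Suc i"
  using assms
proof (induction ts)
  case Nil then show ?case by simp
next
  case (Cons a rest)
  note P = Cons.prems
  note IH = Cons.IH
  show ?case
  proof (cases rest)
    case Nil then show ?thesis using P by simp
  next
    case (Cons b rest')
    show ?thesis
    proof (cases "t < b")
      case True then show ?thesis using P Cons by (intro exI[of _ 0]) auto
    next
      case False
      then have "\<exists>i. Suc i < length rest \<and> rest!i \<le> t \<and> t < rest!Suc i"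
        using IH P Cons by auto
      then obtain i where "Suc i < length rest \<and> rest!i \<le> t \<and> t < rest!Suc i" by blast
      then show ?thesis by (intro exI[of _ "Suc i"]) auto
    qed
  qed
qed

lemma sorted_idx_lt:
  fixes ts :: "real list"
  assumes "sorted_wrt (<) ts" "ts \<noteq> []" "hd ts < t" "t \<le> last ts"
  shows "\<exists>i. Suc i < length ts \<and> ts!i < t \<and> t \<le> ts!Suc i"
  using assms
proof (induction ts)
  case Nil then show ?case by simp
next
  case (Cons a rest)
  note P = Cons.prems
  note IH = Cons.IH
  show ?case
  proof (cases rest)
    case Nil then show ?thesis using P by simp
  next
    case (Cons b rest')
    show ?thesis
    proof (cases "t \<le> b")
      case True then show ?thesis using P Cons by (intro exI[of _ 0]) auto
    next
      case False
      then have "\<exists>i. Suc i < length rest \<and> rest!i < t \<and> t \<le> rest!Suc i"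
        using IH P Cons by auto
      then obtain i where "Suc i < length rest \<and> rest!i < t \<and> t \<le> rest!Suc i" by blast
      then show ?thesis by (intro exI[of _ "Suc i"]) auto
    qed
  qed
qed

lemma rplus_ex:
  assumes "pre_run \<rho>" "0 \<le> t"
  shows "\<exists>e>0. \<forall>s. t < s \<and> s < t + e \<longrightarrow> \<rho> s = rplus \<rho> t"
proof -
  have "(0::real) < t + 1" using assms by simp
  then obtain ts :: "real list" where ts: "ts \<noteq> []" "sorted_wrt (<) ts" "hd ts = 0" "last ts = t + 1"
     and c: "\<forall>i. Suc i < length ts \<longrightarrow> (\<forall>u \<in> {ts!i<..<ts!Suc i}. \<forall>v \<in> {ts!i<..<ts!Suc i}. \<rho> u = \<rho> v)"
    using assms(1) unfolding pre_run_def by blast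
  have "\<exists>i. Suc i < length ts \<and> ts!i \<le> t \<and> t < ts!Suc i"
    by (rule sorted_idx_le[OF ts(2) ts(1)]) (use ts assms in auto)
  then obtain i where i: "Suc i < length ts" "ts!i \<le> t" "t < ts!Suc i" by blast
  define e where "e = ts!Suc i - t"
  have e: "e > 0" using i e_def by simp
  have const: "\<forall>u v. t < u \<and> u < t + e \<and> t < v \<and> v < t + e \<longrightarrow> \<rho> u = \<rho> v"
  proof (intro allI impI)
    fix u v assume uv: "t < u \<and> u < t + e \<and> t < v \<and> v < t + e"
    have "u \<in> {ts!i<..<ts!Suc i}" "v \<in> {ts!i<..<ts!Suc i}" using uv i e_def by auto
    then show "\<rho> u = \<rho> v" using c i(1) by blast
  qed
  define c0 where "c0 = \<rho> (t + e/2)"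
  have all: "\<forall>u. t < u \<and> u < t + e \<longrightarrow> \<rho> u = c0"
  proof (intro allI impI)
    fix u assume u: "t < u \<and> u < t + e"
    have "t < t + e/2 \<and> t + e/2 < t + e" using e by simp
    then show "\<rho> u = c0" unfolding c0_def using const u by blast
  qed
  have ex: "\<exists>\<epsilon>>0. \<forall>u \<in> {t<..<t+\<epsilon>}. \<rho> u = c0"
    using all e by (intro exI[of _ e]) simp
  have "rplus \<rho> t = c0"
    unfolding rplus_def
  proof (rule the_equality)
    show "\<exists>\<epsilon>>0. \<forall>u \<in> {t<..<t+\<epsilon>}. \<rho> u = c0" by (rule ex)
  next
    fix s assume "\<exists>\<epsilon>>0. \<forall>u \<in> {t<..<t+\<epsilon>}. \<rho> u = s"
    then obtain \<epsilon> where "\<epsilon> > 0" "\<forall>u \<in> {t<..<t+\<epsilon>}. \<rho> u = s" by blast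
    moreover have "t + min \<epsilon> e / 2 \<in> {t<..<t+\<epsilon>}" using \<open>\<epsilon>>0\<close> e by auto
    ultimately have "\<rho> (t + min \<epsilon> e / 2) = s" by blast
    moreover have "\<rho> (t + min \<epsilon> e / 2) = c0" using all e \<open>\<epsilon>>0\<close> by simp
    ultimately show "s = c0" by simp
  qed
  then show ?thesis using all e by (intro exI[of _ e]) simp
qed

lemma rminus_ex:
  assumes "pre_run \<rho>" "0 < t"
  shows "\<exists>e>0. \<forall>s. t - e < s \<and> s < t \<longrightarrow> \<rho> s = rminus \<rho> t"
proof -
  obtain ts :: "real list" where ts: "ts \<noteq> []" "sorted_wrt (<) ts" "hd ts = 0" "last ts = t"
     and c: "\<forall>i. Suc i < length ts \<longrightarrow> (\<forall>u \<in> {ts!i<..<ts!Suc i}. \<forall>v \<in> {ts!i<..<ts!Suc i}. \<rho> u = \<rho> v)"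
    using assms unfolding pre_run_def by blast
  have "\<exists>i. Suc i < length ts \<and> ts!i < t \<and> t \<le> ts!Suc i"
    by (rule sorted_idx_lt[OF ts(2) ts(1)]) (use ts assms in auto)
  then obtain i where i: "Suc i < length ts" "ts!i < t" "t \<le> ts!Suc i" by blast
  define e where "e = t - ts!i"
  have e: "e > 0" using i e_def by simp
  have const: "\<forall>u v. t - e < u \<and> u < t \<and> t - e < v \<and> v < t \<longrightarrow> \<rho> u = \<rho> v"
  proof (intro allI impI)
    fix u v assume uv: "t - e < u \<and> u < t \<and> t - e < v \<and> v < t"
    have "u \<in> {ts!i<..<ts!Suc i}" "v \<in> {ts!i<..<ts!Suc i}" using uv i e_def by auto
    then show "\<rho> u = \<rho> v" using c i(1) by blast
  qed
  define c0 where "c0 = \<rho> (t - e/2)"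
  have all: "\<forall>u. t - e < u \<and> u < t \<longrightarrow> \<rho> u = c0"
  proof (intro allI impI)
    fix u assume u: "t - e < u \<and> u < t"
    have "t - e < t - e/2 \<and> t - e/2 < t" using e by simp
    then show "\<rho> u = c0" unfolding c0_def using const u by blast
  qed
  have ex: "\<exists>\<epsilon>>0. \<forall>u \<in> {t-\<epsilon><..<t}. \<rho> u = c0"
    using all e by (intro exI[of _ e]) simp
  have "rminus \<rho> t = c0"
    unfolding rminus_def
  proof (rule the_equality)
    show "\<exists>\<epsilon>>0. \<forall>u \<in> {t-\<epsilon><..<t}. \<rho> u = c0" by (rule ex)
  next
    fix s assume "\<exists>\<epsilon>>0. \<forall>u \<in> {t-\<epsilon><..<t}. \<rho> u = s"
    then obtain \<epsilon> where "\<epsilon> > 0" "\<forall>u \<in> {t-\<epsilon><..<t}. \<rho> u = s" by blast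
    moreover have "t - min \<epsilon> e / 2 \<in> {t-\<epsilon><..<t}" using \<open>\<epsilon>>0\<close> e by auto
    ultimately have "\<rho> (t - min \<epsilon> e / 2) = s" by blast
    moreover have "\<rho> (t - min \<epsilon> e / 2) = c0" using all e \<open>\<epsilon>>0\<close> by simp
    ultimately show "s = c0" by simp
  qed
  then show ?thesis using all e by (intro exI[of _ e]) simp
qed

lemma time_induct:
  fixes a b :: real
  assumes "a \<le> b" "P a"
    and R: "\<And>t. a \<le> t \<Longrightarrow> t < b \<Longrightarrow> P t \<Longrightarrow> \<exists>e>0. \<forall>s. t < s \<and> s < t + e \<longrightarrow> P s"
    and L: "\<And>t. a < t \<Longrightarrow> t \<le> b \<Longrightarrow> (\<forall>s. a \<le> s \<and> s < t \<longrightarrow> P s) \<Longrightarrow> P t"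
  shows "\<forall>t. a \<le> t \<and> t \<le> b \<longrightarrow> P t"
proof (rule ccontr)
  assume H: "\<not> ?thesis"
  define B where "B = {t. a \<le> t \<and> t \<le> b \<and> \<not> P t}"
  obtain x where x: "x \<in> B" using H B_def by auto
  have bdd: "bdd_below B" unfolding B_def by (rule bdd_belowI[of _ a]) auto
  define c where "c = Inf B"
  have ca: "a \<le> c" unfolding c_def using x by (intro cInf_greatest) (auto simp: B_def)
  have cx: "c \<le> x" unfolding c_def using x bdd by (rule cInf_lower)
  have cb: "c \<le> b" using cx x B_def by auto
  have below: "\<forall>s. a \<le> s \<and> s < c \<longrightarrow> P s"
  proof (intro allI impI)
    fix s assume s: "a \<le> s \<and> s < c"
    show "P s"
    proof (rule ccontr)
      assume "\<not> P s"
      then have "s \<in> B" using s cb B_def by auto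
      then have "c \<le> s" unfolding c_def using bdd by (rule cInf_lower)
      then show False using s by simp
    qed
  qed
  have Pc: "P c"
  proof (cases "c = a")
    case True then show ?thesis using assms(2) by simp
  next
    case False then show ?thesis using L[of c] ca cb below by simp
  qed
  have "c \<noteq> x" using Pc x B_def by auto
  then have cb': "c < b" using cx x B_def by auto
  obtain e where e: "e > 0" "\<forall>s. c < s \<and> s < c + e \<longrightarrow> P s" using R[OF ca cb' Pc] by blast
  have "c + e \<le> Inf B"
  proof (rule cInf_greatest)
    show "B \<noteq> {}" using x by auto
  next
    fix y assume y: "y \<in> B"
    have "c \<le> y" unfolding c_def using y bdd by (rule cInf_lower)
    moreover have "y \<noteq> c" using y Pc B_def by auto
    moreover have "\<not> (c < y \<and> y < c + e)" using y e B_def by auto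
    ultimately show "c + e \<le> y" by auto
  qed
  then show False using e c_def by simp
qed

lemma finite_eps:
  fixes t :: real
  assumes "finite S" "\<forall>x\<in>S. \<exists>e>0. \<forall>s. t < s \<and> s < t + e \<longrightarrow> Q x s"
  shows "\<exists>e>0. \<forall>x\<in>S. \<forall>s. t < s \<and> s < t + e \<longrightarrow> Q x s"
  using assms
proof (induction S rule: finite_induct)
  case empty then show ?case by (intro exI[of _ "1::real"]) auto
next
  case (insert y F)
  obtain e1 :: real where e1: "e1>0" "\<forall>x\<in>F. \<forall>s. t < s \<and> s < t + e1 \<longrightarrow> Q x s" using insert by auto
  obtain e2 :: real where e2: "e2>0" "\<forall>s. t < s \<and> s < t + e2 \<longrightarrow> Q y s" using insert.prems by auto
  show ?case using e1 e2 by (intro exI[of _ "min e1 e2"]) auto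
qed

definition newDL :: "real \<Rightarrow> 'trk st \<Rightarrow> real \<Rightarrow> 'trk \<Rightarrow> xreal" where
  "newDL W s t x = (if TS s x = Coming \<and> DL s x = Infty then Fin (t + W)
     else if TS s x = Empty \<and> xlt (DL s x) Infty then Infty else DL s x)"

definition UU :: "'trk set \<Rightarrow> real \<Rightarrow> real \<Rightarrow> real \<Rightarrow> module set \<Rightarrow> 'trk st \<Rightarrow> real \<Rightarrow> 'trk upd set" where
  "UU Trk dc dop dmin M s t = (\<Union>m\<in>{m \<in> M. consistent (updates Trk dc dop dmin m s t)}. updates Trk dc dop dmin m s t)"

lemma exec_eq: "exec_modules Trk dc dop dmin M s t = apply_upd (UU Trk dc dop dmin M s t) s"
  by (simp add: exec_modules_def UU_def)

lemma mem_UU: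
  "u \<in> UU Trk dc dop dmin M s t \<longleftrightarrow>
   (GateM \<in> M \<and> consistent (gate_updates s) \<and> u \<in> gate_updates s) \<or>
   (ControllerM \<in> M \<and> consistent (ctrl_updates Trk dc dop dmin s t) \<and> u \<in> ctrl_updates Trk dc dop dmin s t)"
proof
  assume "u \<in> UU Trk dc dop dmin M s t"
  then obtain m where "m \<in> M" "consistent (updates Trk dc dop dmin m s t)" "u \<in> updates Trk dc dop dmin m s t"
    unfolding UU_def by blast
  then show "(GateM \<in> M \<and> consistent (gate_updates s) \<and> u \<in> gate_updates s) \<or>
   (ControllerM \<in> M \<and> consistent (ctrl_updates Trk dc dop dmin s t) \<and> u \<in> ctrl_updates Trk dc dop dmin s t)"
    by (cases m) (auto simp: updates_def)
next
  assume "(GateM \<in> M \<and> consistent (gate_updates s) \<and> u \<in> gate_updates s) \<or>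
   (ControllerM \<in> M \<and> consistent (ctrl_updates Trk dc dop dmin s t) \<and> u \<in> ctrl_updates Trk dc dop dmin s t)"
  then show "u \<in> UU Trk dc dop dmin M s t"
  proof
    assume "GateM \<in> M \<and> consistent (gate_updates s) \<and> u \<in> gate_updates s"
    then show ?thesis unfolding UU_def by (intro UN_I[of GateM]) (auto simp: updates_def)
  next
    assume "ControllerM \<in> M \<and> consistent (ctrl_updates Trk dc dop dmin s t) \<and> u \<in> ctrl_updates Trk dc dop dmin s t"
    then show ?thesis unfolding UU_def by (intro UN_I[of ControllerM]) (auto simp: updates_def)
  qed
qed

lemma gate_noDL: "UDeadline x v \<notin> gate_updates s" "UDir d \<notin> gate_updates s"
  by (auto simp: gate_updates_def)

lemma gate_UGate: "UGate g \<in> gate_updates s \<longleftrightarrow> g = (if Dir s = DOpen then Opened else Closed)"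
  by (cases "Dir s") (auto simp: gate_updates_def)

lemma gate_cons: "consistent (gate_updates s)"
  by (cases "Dir s") (auto simp: consistent_def gate_updates_def)

lemma ctrl_noGate: "UGate g \<notin> ctrl_updates Trk dc dop dmin s t"
  by (auto simp: ctrl_updates_def)

lemma ctrl_DL_Trk: "UDeadline x v \<in> ctrl_updates Trk dc dop dmin s t \<Longrightarrow> x \<in> Trk"
  by (auto simp: ctrl_updates_def split: if_splits)

lemma ctrl_DL: "x \<in> Trk \<Longrightarrow> UDeadline x v \<in> ctrl_updates Trk dc dop dmin s t \<longleftrightarrow>
   (TS s x = Coming \<and> DL s x = Infty \<and> v = Fin (t + Wd dc dmin)) \<or> (TS s x = Empty \<and> xlt (DL s x) Infty \<and> v = Infty)"
  by (auto simp: ctrl_updates_def)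

lemma ctrl_Dir: "UDir d \<in> ctrl_updates Trk dc dop dmin s t \<longleftrightarrow>
   (d = DClose \<and> (\<exists>x\<in>Trk. Fin t = DL s x)) \<or> (d = DOpen \<and> Dir s = DClose \<and> safe_to_open Trk dop s t)"
  by (auto simp: ctrl_updates_def)

lemma apply_upd_simps:
  "DL (apply_upd U s) x = (if \<exists>v. UDeadline x v \<in> U then THE v. UDeadline x v \<in> U else DL s x)"
  "Dir (apply_upd U s) = (if \<exists>v. UDir v \<in> U then THE v. UDir v \<in> U else Dir s)"
  "GS (apply_upd U s) = (if \<exists>v. UGate v \<in> U then THE v. UGate v \<in> U else GS s)"
  "TS (apply_upd U s) = TS s"
  by (simp_all add: apply_upd_def)

lemma exec_DL:
  assumes "x \<in> Trk"
  shows "DL (exec_modules Trk dc dop dmin M s t) x =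
    (if ControllerM \<in> M \<and> consistent (ctrl_updates Trk dc dop dmin s t) then newDL (Wd dc dmin) s t x else DL s x)"
proof -
  have memU: "\<And>v. UDeadline x v \<in> UU Trk dc dop dmin M s t \<longleftrightarrow>
     (ControllerM \<in> M \<and> consistent (ctrl_updates Trk dc dop dmin s t) \<and>
      ((TS s x = Coming \<and> DL s x = Infty \<and> v = Fin (t + Wd dc dmin)) \<or> (TS s x = Empty \<and> xlt (DL s x) Infty \<and> v = Infty)))"
    by (simp add: mem_UU gate_noDL ctrl_DL assms)
  show ?thesis unfolding exec_eq apply_upd_simps memU
    by (auto simp: newDL_def)
qed

lemma exec_Dir_noclose:
  assumes "\<forall>x\<in>Trk. DL s x \<noteq> Fin t"
  shows "Dir (exec_modules Trk dc dop dmin M s t) = Dir s \<or> Dir (exec_modules Trk dc dop dmin M s t) = DOpen"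
proof -
  have all: "\<And>v. UDir v \<in> UU Trk dc dop dmin M s t \<Longrightarrow> v = DOpen"
    using assms by (auto simp: mem_UU gate_noDL ctrl_Dir)
  show ?thesis
  proof (cases "\<exists>v. UDir v \<in> UU Trk dc dop dmin M s t")
    case True
    then obtain v where "UDir v \<in> UU Trk dc dop dmin M s t" by blast
    then have "(THE v. UDir v \<in> UU Trk dc dop dmin M s t) = DOpen"
      using all by (intro the_equality) (auto dest: all)
    then show ?thesis unfolding exec_eq apply_upd_simps using True by simp
  next
    case False
    then show ?thesis unfolding exec_eq apply_upd_simps by simp
  qed
qed

lemma exec_Dir_open:
  assumes "ControllerM \<in> M" "consistent (ctrl_updates Trk dc dop dmin s t)"
    "UDir DOpen \<in> ctrl_updates Trk dc dop dmin s t"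
  shows "Dir (exec_modules Trk dc dop dmin M s t) = DOpen"
proof -
  have in1: "UDir DOpen \<in> UU Trk dc dop dmin M s t" using assms by (simp add: mem_UU)
  have all: "\<And>v. UDir v \<in> UU Trk dc dop dmin M s t \<Longrightarrow> v = DOpen"
    using assms unfolding consistent_def by (auto simp: mem_UU gate_noDL)
  have "(THE v. UDir v \<in> UU Trk dc dop dmin M s t) = DOpen"
    using in1 all by (intro the_equality) auto
  then show ?thesis unfolding exec_eq apply_upd_simps using in1 by auto
qed

lemma exec_GS:
  assumes "Dir s = DOpen"
  shows "GS (exec_modules Trk dc dop dmin M s t) = GS s \<or> GS (exec_modules Trk dc dop dmin M s t) = Opened"
proof -
  have all: "\<And>v. UGate v \<in> UU Trk dc dop dmin M s t \<Longrightarrow> v = Opened"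
    using assms by (auto simp: mem_UU ctrl_noGate gate_UGate)
  show ?thesis
  proof (cases "\<exists>v. UGate v \<in> UU Trk dc dop dmin M s t")
    case True
    then obtain v where "UGate v \<in> UU Trk dc dop dmin M s t" by blast
    then have "(THE v. UGate v \<in> UU Trk dc dop dmin M s t) = Opened"
      using all by (intro the_equality) (auto dest: all)
    then show ?thesis unfolding exec_eq apply_upd_simps using True by simp
  next
    case False
    then show ?thesis unfolding exec_eq apply_upd_simps by simp
  qed
qed

lemma ctrl_cons:
  assumes "0 < dop" "\<forall>x\<in>Trk. DL s x = Fin t \<longrightarrow> TS s x \<noteq> Empty"
  shows "consistent (ctrl_updates Trk dc dop dmin s t)"
proof -
  have noboth: "\<not> (UDir DClose \<in> ctrl_updates Trk dc dop dmin s t \<and> UDir DOpen \<in> ctrl_updates Trk dc dop dmin s t)"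
  proof
    assume H: "UDir DClose \<in> ctrl_updates Trk dc dop dmin s t \<and> UDir DOpen \<in> ctrl_updates Trk dc dop dmin s t"
    have "(DClose = DClose \<and> (\<exists>x\<in>Trk. Fin t = DL s x)) \<or> (DClose = DOpen \<and> Dir s = DClose \<and> safe_to_open Trk dop s t)"
      using ctrl_Dir[THEN iffD1] H by blast
    then have "\<exists>x\<in>Trk. Fin t = DL s x" by simp
    then obtain x where x: "x \<in> Trk" "DL s x = Fin t" by auto
    have "(DOpen = DClose \<and> (\<exists>x\<in>Trk. Fin t = DL s x)) \<or> (DOpen = DOpen \<and> Dir s = DClose \<and> safe_to_open Trk dop s t)"
      using ctrl_Dir[THEN iffD1] H by blast
    then have "safe_to_open Trk dop s t" by simp
    then have "TS s x = Empty \<or> xlt (Fin (t + dop)) (DL s x)" unfolding safe_to_open_def using x(1) by blast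
    then show False using x assms by simp
  qed
  have d: "\<And>x a b. UDeadline x a \<in> ctrl_updates Trk dc dop dmin s t \<Longrightarrow> UDeadline x b \<in> ctrl_updates Trk dc dop dmin s t \<Longrightarrow> a = b"
  proof -
    fix x a b assume a: "UDeadline x a \<in> ctrl_updates Trk dc dop dmin s t" and b: "UDeadline x b \<in> ctrl_updates Trk dc dop dmin s t"
    have x: "x \<in> Trk" by (rule ctrl_DL_Trk[OF a])
    note A = ctrl_DL[OF x, THEN iffD1, OF a]
    note B = ctrl_DL[OF x, THEN iffD1, OF b]
    show "a = b" using A B by auto
  qed
  have u: "\<And>a b. UDir a \<in> ctrl_updates Trk dc dop dmin s t \<Longrightarrow> UDir b \<in> ctrl_updates Trk dc dop dmin s t \<Longrightarrow> a = b"
  proof -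
    fix a b assume "UDir a \<in> ctrl_updates Trk dc dop dmin s t" "UDir b \<in> ctrl_updates Trk dc dop dmin s t"
    then show "a = b" using noboth by (cases a; cases b) simp_all
  qed
  show ?thesis unfolding consistent_def using d u ctrl_noGate by blast
qed

lemma is_run_D1: "is_run Trk dc dop dmin \<rho> \<Longrightarrow> pre_run \<rho>"
  unfolding is_run_def by blast

lemma is_run_D2: "is_run Trk dc dop dmin \<rho> \<Longrightarrow> 0 \<le> t \<Longrightarrow> rplus \<rho> t \<noteq> \<rho> t \<Longrightarrow>
   (\<exists>M. rplus \<rho> t = exec_modules Trk dc dop dmin M (\<rho> t) t) \<and> TS (rplus \<rho> t) = TS (\<rho> t)"
  unfolding is_run_def by blast

lemma is_run_D3: "is_run Trk dc dop dmin \<rho> \<Longrightarrow> 0 < t \<Longrightarrow> \<rho> t \<noteq> rminus \<rho> t \<Longrightarrow>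
   same_internal (\<rho> t) (rminus \<rho> t)"
  unfolding is_run_def by blast

lemma TS_rplus: "is_run Trk dc dop dmin \<rho> \<Longrightarrow> 0 \<le> t \<Longrightarrow> TS (rplus \<rho> t) = TS (\<rho> t)"
  using is_run_D2[of Trk dc dop dmin \<rho> t] by (cases "rplus \<rho> t = \<rho> t") simp_all

lemma internal_rminus: "is_run Trk dc dop dmin \<rho> \<Longrightarrow> 0 < t \<Longrightarrow>
   DL (\<rho> t) = DL (rminus \<rho> t) \<and> Dir (\<rho> t) = Dir (rminus \<rho> t) \<and> GS (\<rho> t) = GS (rminus \<rho> t)"
  using is_run_D3[of Trk dc dop dmin \<rho> t] by (cases "\<rho> t = rminus \<rho> t") (simp_all add: same_internal_def)

lemma Dir_rplus:
  assumes "is_run Trk dc dop dmin \<rho>" "0 \<le> t" "\<forall>x\<in>Trk. DL (\<rho> t) x \<noteq> Fin t"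
  shows "Dir (rplus \<rho> t) = Dir (\<rho> t) \<or> Dir (rplus \<rho> t) = DOpen"
proof (cases "rplus \<rho> t = \<rho> t")
  case False
  then obtain M where "rplus \<rho> t = exec_modules Trk dc dop dmin M (\<rho> t) t"
    using is_run_D2[OF assms(1,2) False] by blast
  then show ?thesis using exec_Dir_noclose[OF assms(3)] by simp
qed simp

lemma GS_rplus:
  assumes "is_run Trk dc dop dmin \<rho>" "0 \<le> t" "Dir (\<rho> t) = DOpen"
  shows "GS (rplus \<rho> t) = GS (\<rho> t) \<or> GS (rplus \<rho> t) = Opened"
proof (cases "rplus \<rho> t = \<rho> t")
  case False
  then obtain M where "rplus \<rho> t = exec_modules Trk dc dop dmin M (\<rho> t) t"
    using is_run_D2[OF assms(1,2) False] by blast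
  then show ?thesis using exec_GS[OF assms(3)] by simp
qed simp

lemma DL_rplus:
  assumes run: "is_run Trk dc dop dmin \<rho>" and imm: "immediate Trk dc dop dmin \<rho> ControllerM"
    and t: "0 \<le> t" and cons: "consistent (ctrl_updates Trk dc dop dmin (\<rho> t) t)" and x: "x \<in> Trk"
  shows "DL (rplus \<rho> t) x = newDL (Wd dc dmin) (\<rho> t) t x"
proof (cases "newDL (Wd dc dmin) (\<rho> t) t x = DL (\<rho> t) x")
  case True
  show ?thesis
  proof (cases "rplus \<rho> t = \<rho> t")
    case True2: True
    then show ?thesis using True by simp
  next
    case False
    then obtain M where "rplus \<rho> t = exec_modules Trk dc dop dmin M (\<rho> t) t"
      using is_run_D2[OF run t False] by blast
    then show ?thesis using exec_DL[OF x, of dc dop dmin M "\<rho> t" t] True by auto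
  qed
next
  case False
  have mem: "UDeadline x (newDL (Wd dc dmin) (\<rho> t) t x) \<in> ctrl_updates Trk dc dop dmin (\<rho> t) t"
    using False by (auto simp: ctrl_DL[OF x] newDL_def split: if_splits)
  have ch: "changes (UDeadline x (newDL (Wd dc dmin) (\<rho> t) t x)) (\<rho> t)"
    using False by (simp add: changes_def)
  have "enabled Trk dc dop dmin ControllerM (\<rho> t) t"
    unfolding enabled_def updates_def using cons mem ch by auto
  then have "fires Trk dc dop dmin \<rho> ControllerM t" using imm t unfolding immediate_def by blast
  then obtain M where "ControllerM \<in> M" "rplus \<rho> t = exec_modules Trk dc dop dmin M (\<rho> t) t"
    unfolding fires_def by blast
  then show ?thesis using exec_DL[OF x, of dc dop dmin M "\<rho> t" t] cons by simp
qed

lemma Dir_rplus_open: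
  assumes run: "is_run Trk dc dop dmin \<rho>" and imm: "immediate Trk dc dop dmin \<rho> ControllerM"
    and t: "0 \<le> t" and cons: "consistent (ctrl_updates Trk dc dop dmin (\<rho> t) t)"
    and mem: "UDir DOpen \<in> ctrl_updates Trk dc dop dmin (\<rho> t) t" and cl: "Dir (\<rho> t) = DClose"
  shows "Dir (rplus \<rho> t) = DOpen"
proof -
  have ch: "changes (UDir DOpen) (\<rho> t)" using cl by (simp add: changes_def)
  have "enabled Trk dc dop dmin ControllerM (\<rho> t) t"
    unfolding enabled_def updates_def using cons mem ch by auto
  then have "fires Trk dc dop dmin \<rho> ControllerM t" using imm t unfolding immediate_def by blast
  then obtain M where "ControllerM \<in> M" "rplus \<rho> t = exec_modules Trk dc dop dmin M (\<rho> t) t"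
    unfolding fires_def by blast
  then show ?thesis using exec_Dir_open[OF _ cons mem] by simp
qed

definition phase_struct :: "real \<Rightarrow> real \<Rightarrow> (real \<Rightarrow> 'trk st) \<Rightarrow> 'trk \<Rightarrow> (nat \<Rightarrow> real) \<Rightarrow> (nat \<Rightarrow> bool) \<Rightarrow> bool" where
 "phase_struct dmin dmax \<rho> x tm idx \<longleftrightarrow> tm 0 = 0 \<and> (\<forall>i j. i < j \<longrightarrow> idx j \<longrightarrow> tm i < tm j)
   \<and> (\<forall>i j. i \<le> j \<longrightarrow> idx j \<longrightarrow> idx i)
   \<and> (\<forall>i. idx (3*i+3) \<longrightarrow> motion_segment dmin dmax \<rho> x tm i)
   \<and> (\<forall>i. idx (3*i+3) \<longrightarrow> TS (\<rho> (tm (3*i+3))) x = Empty)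
   \<and> (\<forall>t\<ge>0. (\<exists>i. idx (3*i+3) \<and> tm (3*i) \<le> t \<and> t < tm (3*i+3)) \<or>
        (\<exists>k. idx k \<and> (\<forall>j. idx j \<longrightarrow> j \<le> k) \<and> tm k \<le> t \<and> (\<forall>u\<ge>tm k. TS (\<rho> u) x = Empty)))"

lemma locate:
  fixes tm :: "nat \<Rightarrow> real"
  assumes "tm 0 \<le> t" "t < tm n"
  shows "\<exists>j<n. tm j \<le> t \<and> t < tm (Suc j)"
  using assms
proof (induction n)
  case 0 then show ?case by simp
next
  case (Suc n)
  show ?case
  proof (cases "t < tm n")
    case True
    then obtain j where "j < n" "tm j \<le> t \<and> t < tm (Suc j)" using Suc by blast
    then show ?thesis by (intro exI[of _ j]) simp
  next
    case False
    then show ?thesis using Suc.prems by (intro exI[of _ n]) simp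
  qed
qed

lemma div3_bounds: "3 * (j div 3) \<le> j" "Suc j \<le> 3 * (j div 3) + 3" for j :: nat
  by linarith+

lemma tm_grow:
  fixes tm :: "nat \<Rightarrow> real"
  assumes "strict_mono tm" "\<forall>i. motion_segment dmin dmax \<rho> x tm i" "tm 0 = 0"
  shows "real i * dmin \<le> tm (3*i)"
proof (induction i)
  case 0 then show ?case using assms by simp
next
  case (Suc i)
  have a: "dmin \<le> tm (3*i+2) - tm (3*i+1)" using assms(2) unfolding motion_segment_def by blast
  have b: "tm (3*i) < tm (3*i+1)" "tm (3*i+2) < tm (3*i+3)" using assms(1) by (simp_all add: strict_mono_less)
  have c: "3 * Suc i = 3*i+3" by simp
  show ?case using Suc a b unfolding c by (simp add: algebra_simps)
qed

lemma phases_inf: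
  fixes tm :: "nat \<Rightarrow> real"
  assumes tm0: "tm 0 = 0" and sm: "strict_mono tm" and seg: "\<forall>i. motion_segment dmin dmax \<rho> x tm i" and dmin: "0 < dmin"
  shows "phase_struct dmin dmax \<rho> x tm (\<lambda>_. True)"
  unfolding phase_struct_def
proof (intro conjI allI impI)
  show "tm 0 = 0" by (rule tm0)
next
  fix i j :: nat assume "i < j" then show "tm i < tm j" using sm by (simp add: strict_mono_less)
next
  fix i j :: nat assume "i \<le> j" then show True by simp
next
  fix i show "motion_segment dmin dmax \<rho> x tm i" using seg by blast
next
  fix i :: nat
  have m: "motion_segment dmin dmax \<rho> x tm (Suc i)" using seg by blast
  have c: "3 * Suc i = 3*i+3" "3 * Suc i + 1 = 3*i+4" by simp_all
  have "tm (3*i+3) < tm (3*Suc i+1)" using sm by (simp add: strict_mono_less)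
  then have mem: "tm (3*i+3) \<in> {tm (3*Suc i)..<tm (3*Suc i+1)}" by (simp add: ac_simps)
  have E: "\<forall>u\<in>{tm (3*Suc i)..<tm (3*Suc i+1)}. TS (\<rho> u) x = Empty" using m unfolding motion_segment_def by blast
  show "TS (\<rho> (tm (3*i+3))) x = Empty" using E mem by blast
next
  fix t :: real assume t: "0 \<le> t"
  obtain n :: nat where n: "t < real n * dmin" using reals_Archimedean3[OF dmin] by blast
  have "t < tm (3*n)" using n tm_grow[OF sm seg tm0, of n] by simp
  then obtain j where j: "tm j \<le> t" "t < tm (Suc j)" using locate[of tm t "3*n"] t tm0 by auto
  have "tm (3 * (j div 3)) \<le> tm j" using sm div3_bounds(1)[of j] by (simp add: strict_mono_less_eq)
  moreover have "tm (Suc j) \<le> tm (3 * (j div 3) + 3)" using sm div3_bounds(2)[of j] by (simp add: strict_mono_less_eq)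
  ultimately have "True \<and> tm (3 * (j div 3)) \<le> t \<and> t < tm (3 * (j div 3) + 3)" using j by simp
  then show "(\<exists>i. True \<and> tm (3*i) \<le> t \<and> t < tm (3*i+3)) \<or>
        (\<exists>k. True \<and> (\<forall>j. True \<longrightarrow> j \<le> k) \<and> tm k \<le> t \<and> (\<forall>u\<ge>tm k. TS (\<rho> u) x = Empty))" by blast
qed

lemma mono_fin:
  fixes tm :: "nat \<Rightarrow> real"
  assumes "\<forall>i<k. tm i < tm (Suc i)"
  shows "i < j \<Longrightarrow> j \<le> k \<Longrightarrow> tm i < tm j"
proof (induction j)
  case 0 then show ?case by simp
next
  case (Suc j)
  have s: "tm j < tm (Suc j)" using assms Suc.prems by simp
  show ?case
  proof (cases "i = j")
    case True then show ?thesis using s by simp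
  next
    case False then have "i < j" using Suc.prems by simp
    then show ?thesis using Suc.IH Suc.prems s by simp
  qed
qed

lemma phases_fin:
  fixes tm :: "nat \<Rightarrow> real"
  assumes tm0: "tm 0 = 0" and mo: "\<forall>i<k. tm i < tm (Suc i)" and dv: "3 dvd k"
    and seg: "\<forall>i. 3*i+3 \<le> k \<longrightarrow> motion_segment dmin dmax \<rho> x tm i"
    and tail: "\<forall>u\<ge>tm k. TS (\<rho> u) x = Empty"
  shows "phase_struct dmin dmax \<rho> x tm (\<lambda>j. j \<le> k)"
  unfolding phase_struct_def
proof (intro conjI allI impI)
  show "tm 0 = 0" by (rule tm0)
next
  fix i j :: nat assume "i < j" "j \<le> k" then show "tm i < tm j" using mono_fin[OF mo] by blast
next
  fix i j :: nat assume "i \<le> j" "j \<le> k" then show "i \<le> k" by simp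
next
  fix i :: nat assume "3*i+3 \<le> k" then show "motion_segment dmin dmax \<rho> x tm i" using seg by blast
next
  fix i :: nat assume i: "3*i+3 \<le> k"
  obtain m where m: "k = 3*m" using dv by blast
  show "TS (\<rho> (tm (3*i+3))) x = Empty"
  proof (cases "3*i+6 \<le> k")
    case True
    have ms: "motion_segment dmin dmax \<rho> x tm (Suc i)" using seg True by simp
    have c: "3 * Suc i = 3*i+3" "3 * Suc i + 1 = 3*i+4" by simp_all
    have "tm (3*i+3) < tm (3*Suc i+1)" using mono_fin[OF mo, of "3*i+3" "3*Suc i+1"] True by simp
    then have mem: "tm (3*i+3) \<in> {tm (3*Suc i)..<tm (3*Suc i+1)}" by (simp add: ac_simps)
    have E: "\<forall>u\<in>{tm (3*Suc i)..<tm (3*Suc i+1)}. TS (\<rho> u) x = Empty" using ms unfolding motion_segment_def by blast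
    show ?thesis using E mem by blast
  next
    case False
    then have "k = 3*i+3" using i m by presburger
    then show ?thesis using tail by simp
  qed
next
  fix t :: real assume t: "0 \<le> t"
  obtain m where m: "k = 3*m" using dv by blast
  have le: "\<And>a b. a \<le> b \<Longrightarrow> b \<le> k \<Longrightarrow> tm a \<le> tm b"
    using mono_fin[OF mo] by (metis le_less order_refl)
  show "(\<exists>i. 3*i+3 \<le> k \<and> tm (3*i) \<le> t \<and> t < tm (3*i+3)) \<or>
        (\<exists>ka. ka \<le> k \<and> (\<forall>j. j \<le> k \<longrightarrow> j \<le> ka) \<and> tm ka \<le> t \<and> (\<forall>u\<ge>tm ka. TS (\<rho> u) x = Empty))"
  proof (cases "tm k \<le> t")
    case True then show ?thesis using tail by blast
  next
    case False
    then obtain j where j: "j < k" "tm j \<le> t" "t < tm (Suc j)" using locate[of tm t k] t tm0 by auto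
    have k3: "3 * (j div 3) + 3 \<le> k" using j(1) m by presburger
    have "tm (3 * (j div 3)) \<le> tm j" using le[OF div3_bounds(1)[of j]] j(1) by simp
    moreover have "tm (Suc j) \<le> tm (3 * (j div 3) + 3)" using le[OF div3_bounds(2)[of j] k3] .
    ultimately show ?thesis using j k3 by (intro disjI1 exI[of _ "j div 3"]) simp
  qed
qed

lemma phases:
  assumes "train_motion dmin dmax \<rho> x" "0 < dmin"
  shows "\<exists>tm idx. phase_struct dmin dmax \<rho> x tm idx"
  using assms phases_inf phases_fin unfolding train_motion_def by metis

context
  fixes dmin dmax :: real and \<rho> :: "real \<Rightarrow> 'trk st" and x :: 'trk and tm :: "nat \<Rightarrow> real" and idx :: "nat \<Rightarrow> bool"
  assumes PS: "phase_struct dmin dmax \<rho> x tm idx"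
begin

lemma ps_tm0: "tm 0 = 0" using PS unfolding phase_struct_def by blast
lemma ps_lt: "i < j \<Longrightarrow> idx j \<Longrightarrow> tm i < tm j" using PS unfolding phase_struct_def by blast
lemma ps_down: "i \<le> j \<Longrightarrow> idx j \<Longrightarrow> idx i" using PS unfolding phase_struct_def by blast
lemma ps_seg: "idx (3*i+3) \<Longrightarrow> motion_segment dmin dmax \<rho> x tm i" using PS unfolding phase_struct_def by blast
lemma ps_end: "idx (3*i+3) \<Longrightarrow> TS (\<rho> (tm (3*i+3))) x = Empty" using PS unfolding phase_struct_def by blast
lemma ps_loc: "0 \<le> t \<Longrightarrow> (\<exists>i. idx (3*i+3) \<and> tm (3*i) \<le> t \<and> t < tm (3*i+3)) \<or>
        (\<exists>k. idx k \<and> (\<forall>j. idx j \<longrightarrow> j \<le> k) \<and> tm k \<le> t \<and> (\<forall>u\<ge>tm k. TS (\<rho> u) x = Empty))"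
  using PS unfolding phase_struct_def by blast

lemma ps_le: "i \<le> j \<Longrightarrow> idx j \<Longrightarrow> tm i \<le> tm j"
  using ps_lt[of i j] by (cases "i = j") auto

lemma seg_E: "idx (3*i+3) \<Longrightarrow> tm (3*i) \<le> u \<Longrightarrow> u < tm (3*i+1) \<Longrightarrow> TS (\<rho> u) x = Empty"
  using ps_seg[of i] unfolding motion_segment_def by auto
lemma seg_C: "idx (3*i+3) \<Longrightarrow> tm (3*i+1) \<le> u \<Longrightarrow> u < tm (3*i+2) \<Longrightarrow> TS (\<rho> u) x = Coming"
  using ps_seg[of i] unfolding motion_segment_def by auto
lemma seg_I: "idx (3*i+3) \<Longrightarrow> tm (3*i+2) \<le> u \<Longrightarrow> u < tm (3*i+3) \<Longrightarrow> TS (\<rho> u) x = Incrossing"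
  using ps_seg[of i] unfolding motion_segment_def by auto
lemma seg_min: "idx (3*i+3) \<Longrightarrow> dmin \<le> tm (3*i+2) - tm (3*i+1)"
  using ps_seg[of i] unfolding motion_segment_def by auto
lemma seg_max: "idx (3*i+3) \<Longrightarrow> tm (3*i+2) - tm (3*i+1) \<le> dmax"
  using ps_seg[of i] unfolding motion_segment_def by auto

lemma ps_ord: "idx (3*i+3) \<Longrightarrow> tm (3*i) < tm (3*i+1) \<and> tm (3*i+1) < tm (3*i+2) \<and> tm (3*i+2) < tm (3*i+3)"
  using ps_lt[of "3*i" "3*i+1"] ps_lt[of "3*i+1" "3*i+2"] ps_lt[of "3*i+2" "3*i+3"]
    ps_down[of "3*i+1" "3*i+3"] ps_down[of "3*i+2" "3*i+3"] by simp

lemma ps_disj: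
  assumes "idx (3*i+3)" "idx (3*j+3)" "tm (3*i+1) < s" "s \<le> tm (3*i+3)" "tm (3*j+1) < s" "s \<le> tm (3*j+3)"
  shows "i = j"
proof (rule ccontr)
  assume "i \<noteq> j"
  then consider "i < j" | "j < i" by linarith
  then show False
  proof cases
    case 1
    have "idx (3*j+1)" using ps_down[of "3*j+1" "3*j+3"] assms(2) by simp
    then have "tm (3*i+3) \<le> tm (3*j+1)" using ps_le[of "3*i+3" "3*j+1"] 1 by simp
    then show False using assms by simp
  next
    case 2
    have "idx (3*i+1)" using ps_down[of "3*i+1" "3*i+3"] assms(1) by simp
    then have "tm (3*j+3) \<le> tm (3*i+1)" using ps_le[of "3*j+3" "3*i+1"] 2 by simp
    then show False using assms by simp
  qed
qed

lemma ps_gap: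
  assumes "idx (3*i+3)" "tm (3*i) < s" "s \<le> tm (3*i+1)" "idx (3*j+3)" "tm (3*j+1) < s" "s \<le> tm (3*j+3)"
  shows False
proof -
  consider "j < i" | "j = i" | "i < j" by linarith
  then show False
  proof cases
    case 1
    have "idx (3*i)" using ps_down[of "3*i" "3*i+3"] assms(1) by simp
    then have "tm (3*j+3) \<le> tm (3*i)" using ps_le[of "3*j+3" "3*i"] 1 by simp
    then show False using assms by simp
  next
    case 2 then show False using assms by simp
  next
    case 3
    have "idx (3*j+1)" using ps_down[of "3*j+1" "3*j+3"] assms(4) by simp
    then have "tm (3*i+1) < tm (3*j+1)" using ps_lt[of "3*i+1" "3*j+1"] 3 by simp
    then show False using assms by simp
  qed
qed

definition invv :: "real \<Rightarrow> real \<Rightarrow> xreal \<Rightarrow> bool" where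
  "invv W t d \<longleftrightarrow> (\<forall>i. idx (3*i+3) \<and> tm (3*i+1) < t \<and> t \<le> tm (3*i+3) \<longrightarrow> d = Fin (tm (3*i+1) + W)) \<and>
     (d \<noteq> Infty \<longrightarrow> (\<exists>i. idx (3*i+3) \<and> tm (3*i+1) < t \<and> t \<le> tm (3*i+3)))"

lemma invv_in: "idx (3*i+3) \<Longrightarrow> tm (3*i+1) < s \<Longrightarrow> s \<le> tm (3*i+3) \<Longrightarrow> invv W s (Fin (tm (3*i+1) + W))"
  unfolding invv_def using ps_disj by blast

lemma invv_out: "idx (3*i+3) \<Longrightarrow> tm (3*i) < s \<Longrightarrow> s \<le> tm (3*i+1) \<Longrightarrow> invv W s Infty"
  unfolding invv_def using ps_gap by blast

lemma invv_tail: "idx k \<Longrightarrow> \<forall>j. idx j \<longrightarrow> j \<le> k \<Longrightarrow> tm k < s \<Longrightarrow> invv W s Infty"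
  unfolding invv_def
proof (intro conjI allI impI)
  fix i assume a: "idx k" "\<forall>j. idx j \<longrightarrow> j \<le> k" "tm k < s" "idx (3*i+3) \<and> tm (3*i+1) < s \<and> s \<le> tm (3*i+3)"
  then have "3*i+3 \<le> k" by blast
  then have "tm (3*i+3) \<le> tm k" using ps_le a(1) by blast
  then show "Infty = Fin (tm (3*i+1) + W)" using a by simp
qed simp

lemma invv_0: "invv W 0 Infty"
  unfolding invv_def
proof (intro conjI allI impI)
  fix i assume a: "idx (3*i+3) \<and> tm (3*i+1) < 0 \<and> 0 \<le> tm (3*i+3)"
  have "idx (3*i+1)" using ps_down[of "3*i+1" "3*i+3"] a by simp
  then have "tm 0 < tm (3*i+1)" using ps_lt[of 0 "3*i+1"] by simp
  then show "Infty = Fin (tm (3*i+1) + W)" using a ps_tm0 by simp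
qed simp

lemma invv_Fin: "invv W t (Fin d) \<Longrightarrow> \<exists>i. idx (3*i+3) \<and> tm (3*i+1) < t \<and> t \<le> tm (3*i+3) \<and> d = tm (3*i+1) + W"
  unfolding invv_def by auto

lemma invv_left:
  assumes e: "0 < e" and H: "\<forall>s. t - e < s \<and> s < t \<longrightarrow> invv W s d"
  shows "invv W t d"
  unfolding invv_def
proof (intro conjI allI impI)
  fix i assume a: "idx (3*i+3) \<and> tm (3*i+1) < t \<and> t \<le> tm (3*i+3)"
  define s where "s = (max (tm (3*i+1)) (t - e) + t) / 2"
  have s: "t - e < s" "s < t" "tm (3*i+1) < s" "s \<le> tm (3*i+3)" using a e s_def by auto
  then show "d = Fin (tm (3*i+1) + W)" using H a unfolding invv_def by blast
next
  assume d: "d \<noteq> Infty"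
  define s1 where "s1 = t - e/2"
  have s1: "t - e < s1" "s1 < t" using e s1_def by auto
  then have inv1: "invv W s1 d" using H by blast
  then obtain i1 where i1: "idx (3*i1+3)" "tm (3*i1+1) < s1" "s1 \<le> tm (3*i1+3)" using d unfolding invv_def by blast
  have d1: "d = Fin (tm (3*i1+1) + W)" using inv1 i1 unfolding invv_def by blast
  show "\<exists>i. idx (3*i+3) \<and> tm (3*i+1) < t \<and> t \<le> tm (3*i+3)"
  proof (cases "t \<le> tm (3*i1+3)")
    case True then show ?thesis using i1 s1 by (intro exI[of _ i1]) simp
  next
    case False
    define s2 where "s2 = (max (tm (3*i1+3)) (t - e) + t) / 2"
    have s2: "t - e < s2" "s2 < t" "tm (3*i1+3) < s2" using False e s2_def by auto
    then have inv2: "invv W s2 d" using H by blast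
    then obtain i2 where i2: "idx (3*i2+3)" "tm (3*i2+1) < s2" "s2 \<le> tm (3*i2+3)" using d unfolding invv_def by blast
    have d2: "d = Fin (tm (3*i2+1) + W)" using inv2 i2 unfolding invv_def by blast
    have eq: "tm (3*i1+1) = tm (3*i2+1)" using d1 d2 by simp
    have "i1 = i2"
    proof (rule ccontr)
      assume "i1 \<noteq> i2"
      then consider "i1 < i2" | "i2 < i1" by linarith
      then show False
      proof cases
        case 1
        have "idx (3*i2+1)" using ps_down[of "3*i2+1" "3*i2+3"] i2(1) by simp
        then show False using ps_lt[of "3*i1+1" "3*i2+1"] 1 eq by simp
      next
        case 2
        have "idx (3*i1+1)" using ps_down[of "3*i1+1" "3*i1+3"] i1(1) by simp
        then show False using ps_lt[of "3*i2+1" "3*i1+1"] 2 eq by simp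
      qed
    qed
    then show ?thesis using s2 i2 by simp
  qed
qed

lemma newDL_empty: "TS s y = Empty \<Longrightarrow> newDL W s t y = Infty"
  by (cases "DL s y") (simp_all add: newDL_def)
lemma newDL_start: "TS s y = Coming \<Longrightarrow> DL s y = Infty \<Longrightarrow> newDL W s t y = Fin (t + W)"
  by (simp add: newDL_def)
lemma newDL_keep: "DL s y \<noteq> Infty \<Longrightarrow> TS s y \<noteq> Empty \<Longrightarrow> newDL W s t y = DL s y"
  by (simp add: newDL_def)

lemma invv_right:
  assumes t: "0 \<le> t" and I: "invv W t (DL (\<rho> t) x)"
  shows "\<exists>e>0. \<forall>s. t < s \<and> s < t + e \<longrightarrow> invv W s (newDL W (\<rho> t) t x)"
proof -
  from ps_loc[OF t] show ?thesis
  proof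
    assume "\<exists>i. idx (3*i+3) \<and> tm (3*i) \<le> t \<and> t < tm (3*i+3)"
    then obtain i where i: "idx (3*i+3)" "tm (3*i) \<le> t" "t < tm (3*i+3)" by blast
    note o = ps_ord[OF i(1)]
    consider "t < tm (3*i+1)" | "t = tm (3*i+1)" | "tm (3*i+1) < t" by linarith
    then show ?thesis
    proof cases
      case 1
      have "TS (\<rho> t) x = Empty" using seg_E[OF i(1) i(2) 1] .
      then have n: "newDL W (\<rho> t) t x = Infty" by (rule newDL_empty)
      show ?thesis
      proof (intro exI[of _ "tm (3*i+1) - t"] conjI allI impI)
        show "0 < tm (3*i+1) - t" using 1 by simp
      next
        fix s assume "t < s \<and> s < t + (tm (3*i+1) - t)"
        then have "tm (3*i) < s" "s \<le> tm (3*i+1)" using i(2) by auto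
        then show "invv W s (newDL W (\<rho> t) t x)" unfolding n by (rule invv_out[OF i(1)])
      qed
    next
      case 2
      have C: "TS (\<rho> t) x = Coming" using seg_C[OF i(1)] 2 o by simp
      have D: "DL (\<rho> t) x = Infty"
      proof (rule ccontr)
        assume "DL (\<rho> t) x \<noteq> Infty"
        then obtain j where j: "idx (3*j+3)" "tm (3*j+1) < t" "t \<le> tm (3*j+3)" using I unfolding invv_def by blast
        have a: "tm (3*i) < t" "t \<le> tm (3*i+1)" using 2 o by simp_all
        show False by (rule ps_gap[OF i(1) a j])
      qed
      have n: "newDL W (\<rho> t) t x = Fin (tm (3*i+1) + W)" using newDL_start[OF C D] 2 by simp
      show ?thesis
      proof (intro exI[of _ "tm (3*i+3) - t"] conjI allI impI)
        show "0 < tm (3*i+3) - t" using i by simp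
      next
        fix s assume "t < s \<and> s < t + (tm (3*i+3) - t)"
        then show "invv W s (newDL W (\<rho> t) t x)" unfolding n using invv_in[OF i(1)] 2 by simp
      qed
    next
      case 3
      have "idx (3*i+3) \<and> tm (3*i+1) < t \<and> t \<le> tm (3*i+3)" using i 3 by simp
      then have D: "DL (\<rho> t) x = Fin (tm (3*i+1) + W)" using I[unfolded invv_def, THEN conjunct1, rule_format, of i] by blast
      have NE: "TS (\<rho> t) x \<noteq> Empty"
      proof (cases "t < tm (3*i+2)")
        case True then show ?thesis using seg_C[OF i(1)] 3 by simp
      next
        case False then show ?thesis using seg_I[OF i(1)] i(3) by simp
      qed
      have n: "newDL W (\<rho> t) t x = Fin (tm (3*i+1) + W)" using newDL_keep[OF _ NE] D by simp
      show ?thesis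
      proof (intro exI[of _ "tm (3*i+3) - t"] conjI allI impI)
        show "0 < tm (3*i+3) - t" using i by simp
      next
        fix s assume "t < s \<and> s < t + (tm (3*i+3) - t)"
        then show "invv W s (newDL W (\<rho> t) t x)" unfolding n using invv_in[OF i(1)] 3 by simp
      qed
    qed
  next
    assume "\<exists>k. idx k \<and> (\<forall>j. idx j \<longrightarrow> j \<le> k) \<and> tm k \<le> t \<and> (\<forall>u\<ge>tm k. TS (\<rho> u) x = Empty)"
    then obtain k where k: "idx k" "\<forall>j. idx j \<longrightarrow> j \<le> k" "tm k \<le> t" "\<forall>u\<ge>tm k. TS (\<rho> u) x = Empty" by blast
    have "TS (\<rho> t) x = Empty" using k(4)[rule_format, OF k(3)] .
    then have n: "newDL W (\<rho> t) t x = Infty" by (rule newDL_empty)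
    show ?thesis
    proof (intro exI[of _ 1] conjI allI impI)
      fix s assume "t < s \<and> s < t + 1"
      then show "invv W s (newDL W (\<rho> t) t x)" unfolding n using invv_tail[OF k(1,2)] k(3) by simp
    qed simp
  qed
qed

lemma fin_self_coming:
  assumes "invv W t (Fin t)" "W < dmin"
  shows "TS (\<rho> t) x = Coming"
proof -
  obtain i where i: "idx (3*i+3)" "tm (3*i+1) < t" "t \<le> tm (3*i+3)" "t = tm (3*i+1) + W"
    using invv_Fin[OF assms(1)] by blast
  have "t < tm (3*i+2)" using seg_min[OF i(1)] i(4) assms(2) by simp
  then show ?thesis using seg_C[OF i(1)] i(2) by simp
qed

lemma late:
  assumes I: "invv W t (Fin d)" and W: "W < dmin" and al: "\<alpha> \<le> t"
    and c: "d = t \<or> TS (\<rho> t) x = Coming"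
    and noinc: "\<forall>u. \<alpha> < u \<and> u < \<beta> \<longrightarrow> TS (\<rho> u) x \<noteq> Incrossing"
  shows "\<beta> - dmax + W \<le> d"
proof -
  obtain i where i: "idx (3*i+3)" "tm (3*i+1) < t" "t \<le> tm (3*i+3)" "d = tm (3*i+1) + W"
    using invv_Fin[OF I] by blast
  note o = ps_ord[OF i(1)]
  have lt: "t < tm (3*i+2)"
  proof (cases "d = t")
    case True then show ?thesis using seg_min[OF i(1)] i(4) W by simp
  next
    case False
    then have C: "TS (\<rho> t) x = Coming" using c by simp
    show ?thesis
    proof (rule ccontr)
      assume "\<not> t < tm (3*i+2)"
      then consider "t < tm (3*i+3)" | "t = tm (3*i+3)" using i(3) by linarith
      then show False
      proof cases
        case 1 then show False using seg_I[OF i(1)] C \<open>\<not> t < tm (3*i+2)\<close> by simp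
      next
        case 2 then show False using ps_end[OF i(1)] C by simp
      qed
    qed
  qed
  have "TS (\<rho> (tm (3*i+2))) x = Incrossing" using seg_I[OF i(1)] o by simp
  then have "\<not> (\<alpha> < tm (3*i+2) \<and> tm (3*i+2) < \<beta>)" using noinc by blast
  then have "\<beta> \<le> tm (3*i+2)" using lt al by linarith
  then show ?thesis using seg_max[OF i(1)] i(4) by simp
qed

end

lemma right_win:
  assumes "pre_run \<rho>" "0 \<le> t" "Pr (rplus \<rho> t)"
  shows "\<exists>e>0. \<forall>s. t < s \<and> s < t + e \<longrightarrow> Pr (\<rho> s)"
proof -
  obtain e where e: "e > 0" "\<forall>s. t < s \<and> s < t + e \<longrightarrow> \<rho> s = rplus \<rho> t" using rplus_ex[OF assms(1,2)] by blast
  show ?thesis using e assms(3) by (intro exI[of _ e]) auto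
qed

lemma left_win:
  assumes "pre_run \<rho>" "0 < t" "a < t" "\<forall>s. a \<le> s \<and> s < t \<longrightarrow> Pr (\<rho> s)"
  shows "Pr (rminus \<rho> t)"
proof -
  obtain e where e: "e > 0" "\<forall>s. t - e < s \<and> s < t \<longrightarrow> \<rho> s = rminus \<rho> t" using rminus_ex[OF assms(1,2)] by blast
  define s where "s = (max a (t - e) + t) / 2"
  have s: "a \<le> s" "s < t" "t - e < s" using s_def e assms(3) by auto
  have "\<rho> s = rminus \<rho> t" using e s by blast
  moreover have "Pr (\<rho> s)" using assms(4) s by blast
  ultimately show ?thesis by simp
qed

theorem mainTheorem10:
  fixes Trk :: "'trk set" and dc dop dmin dmax :: real and \<rho> :: "real \<Rightarrow> 'trk st"
    and \<alpha> \<beta> :: real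
  assumes "finite Trk"
    and "0 < dc" and "0 < dop" and "0 < dmin" and "0 < dmax"
    and "dc < dmin" and "dmin \<le> dmax"
    and "regular_run Trk dc dop dmin dmax \<rho>"
    and "0 \<le> \<alpha>" and "\<alpha> < \<beta>"
    and "\<alpha> + dop < \<beta> - Delta_close dc dmin dmax"
    and "\<forall>x\<in>Trk. \<forall>u \<in> {\<alpha><..<\<beta>}. TS (\<rho> u) x \<noteq> Incrossing"
  shows "\<forall>u \<in> {\<alpha> + dop .. \<beta> - Delta_close dc dmin dmax}. GS (\<rho> u) = Opened"
proof -
  note fin = assms(1)
  have run: "is_run Trk dc dop dmin \<rho>" using assms(8) unfolding regular_run_def by blast
  have init: "initial_state Trk (\<rho> 0)" using assms(8) unfolding regular_run_def by blast
  have tmo: "\<forall>x\<in>Trk. train_motion dmin dmax \<rho> x" using assms(8) unfolding regular_run_def by blast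
  have imm: "immediate Trk dc dop dmin \<rho> ControllerM" using assms(8) unfolding regular_run_def by blast
  have gt: "gate_timing Trk dc dop dmin \<rho>" using assms(8) unfolding regular_run_def by blast
  have pre: "pre_run \<rho>" by (rule is_run_D1[OF run])
  define W where "W = Wd dc dmin"
  have W0: "0 < W" and Wlt: "W < dmin" using assms(2,6) unfolding W_def Wd_def by simp_all
  define Dl where "Dl = Delta_close dc dmin dmax"
  have Dl: "\<beta> - Dl = \<beta> - dmax + W" by (simp add: Dl_def W_def Delta_close_def Wd_def)
  have aD: "\<alpha> + dop < \<beta> - Dl" using assms(11) Dl_def by simp
  have "\<forall>x\<in>Trk. \<exists>p. phase_struct dmin dmax \<rho> x (fst p) (snd p)"
  proof
    fix x assume x: "x \<in> Trk"
    obtain tm idx where "phase_struct dmin dmax \<rho> x tm idx"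
      using phases[OF tmo[rule_format, OF x] assms(4)] by blast
    then show "\<exists>p. phase_struct dmin dmax \<rho> x (fst p) (snd p)" by (intro exI[of _ "(tm, idx)"]) simp
  qed
  from bchoice[OF this] obtain P where P: "\<forall>x\<in>Trk. phase_struct dmin dmax \<rho> x (fst (P x)) (snd (P x))"
    by blast
  define TM where "TM x = fst (P x)" for x
  define IDX where "IDX x = snd (P x)" for x
  have PS: "\<And>x. x \<in> Trk \<Longrightarrow> phase_struct dmin dmax \<rho> x (TM x) (IDX x)"
    using P TM_def IDX_def by simp
  define Q where "Q t \<longleftrightarrow> (\<forall>x\<in>Trk. invv (TM x) (IDX x) W t (DL (\<rho> t) x))" for t
  have cons: "consistent (ctrl_updates Trk dc dop dmin (\<rho> t) t)" if q: "Q t" for t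
  proof (rule ctrl_cons[OF assms(3)])
    show "\<forall>x\<in>Trk. DL (\<rho> t) x = Fin t \<longrightarrow> TS (\<rho> t) x \<noteq> Empty"
    proof (intro ballI impI)
      fix x assume x: "x \<in> Trk" and d: "DL (\<rho> t) x = Fin t"
      have "invv (TM x) (IDX x) W t (DL (\<rho> t) x)" using q x unfolding Q_def by blast
      then have "invv (TM x) (IDX x) W t (Fin t)" using d by simp
      then have "TS (\<rho> t) x = Coming" using fin_self_coming[OF PS[OF x] _ Wlt] by blast
      then show "TS (\<rho> t) x \<noteq> Empty" by simp
    qed
  qed
  have INV: "\<forall>t. 0 \<le> t \<and> t \<le> T \<longrightarrow> Q t" if T: "0 \<le> T" for T
  proof (rule time_induct[OF T])
    show "Q 0" unfolding Q_def
    proof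
      fix x assume x: "x \<in> Trk"
      have "DL (\<rho> 0) x = Infty" using init x unfolding initial_state_def by blast
      then show "invv (TM x) (IDX x) W 0 (DL (\<rho> 0) x)" using invv_0[OF PS[OF x]] by simp
    qed
  next
    fix t assume t: "0 \<le> t" "t < T" "Q t"
    have c: "consistent (ctrl_updates Trk dc dop dmin (\<rho> t) t)" by (rule cons[OF t(3)])
    obtain e0 where e0: "e0 > 0" "\<forall>s. t < s \<and> s < t + e0 \<longrightarrow> \<rho> s = rplus \<rho> t"
      using rplus_ex[OF pre t(1)] by blast
    have "\<forall>x\<in>Trk. \<exists>e>0. \<forall>s. t < s \<and> s < t + e \<longrightarrow> invv (TM x) (IDX x) W s (newDL W (\<rho> t) t x)"
    proof
      fix x assume x: "x \<in> Trk"
      have "invv (TM x) (IDX x) W t (DL (\<rho> t) x)" using t(3) x unfolding Q_def by blast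
      then show "\<exists>e>0. \<forall>s. t < s \<and> s < t + e \<longrightarrow> invv (TM x) (IDX x) W s (newDL W (\<rho> t) t x)"
        by (rule invv_right[OF PS[OF x] t(1)])
    qed
    from finite_eps[OF fin this] obtain e1 where e1: "e1 > 0" "\<forall>x\<in>Trk. \<forall>s. t < s \<and> s < t + e1 \<longrightarrow> invv (TM x) (IDX x) W s (newDL W (\<rho> t) t x)"
      by blast
    show "\<exists>e>0. \<forall>s. t < s \<and> s < t + e \<longrightarrow> Q s"
    proof (intro exI[of _ "min e0 e1"] conjI allI impI)
      show "0 < min e0 e1" using e0 e1 by simp
    next
      fix s assume s: "t < s \<and> s < t + min e0 e1"
      have "t < s \<and> s < t + e0" using s by (auto simp: min_def split: if_splits)
      then have r: "\<rho> s = rplus \<rho> t" using e0 by blast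
      show "Q s" unfolding Q_def
      proof
        fix x assume x: "x \<in> Trk"
        have "DL (\<rho> s) x = newDL W (\<rho> t) t x" unfolding r W_def by (rule DL_rplus[OF run imm t(1) c x])
        moreover have "t < s \<and> s < t + e1" using s by (auto simp: min_def split: if_splits)
        ultimately show "invv (TM x) (IDX x) W s (DL (\<rho> s) x)" using e1(2)[rule_format, OF x] by simp
      qed
    qed
  next
    fix t assume t: "0 < t" "t \<le> T" and H: "\<forall>s. 0 \<le> s \<and> s < t \<longrightarrow> Q s"
    obtain e0 where e0: "e0 > 0" "\<forall>s. t - e0 < s \<and> s < t \<longrightarrow> \<rho> s = rminus \<rho> t"
      using rminus_ex[OF pre t(1)] by blast
    have dl: "DL (\<rho> t) = DL (rminus \<rho> t)" using internal_rminus[OF run t(1)] by blast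
    show "Q t" unfolding Q_def
    proof
      fix x assume x: "x \<in> Trk"
      show "invv (TM x) (IDX x) W t (DL (\<rho> t) x)"
      proof (rule invv_left[OF PS[OF x], of "min e0 t"])
        show "0 < min e0 t" using e0 t by simp
      next
        show "\<forall>s. t - min e0 t < s \<and> s < t \<longrightarrow> invv (TM x) (IDX x) W s (DL (\<rho> t) x)"
        proof (intro allI impI)
          fix s assume s: "t - min e0 t < s \<and> s < t"
          have "0 \<le> s \<and> s < t" using s by (auto simp: min_def split: if_splits)
          then have "Q s" using H by blast
          then have "invv (TM x) (IDX x) W s (DL (\<rho> s) x)" using x unfolding Q_def by blast
          moreover have "\<rho> s = rminus \<rho> t"
          proof -
            have "t - e0 < s \<and> s < t" using s by (auto simp: min_def split: if_splits)
            then show ?thesis using e0 by blast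
          qed
          ultimately show "invv (TM x) (IDX x) W s (DL (\<rho> t) x)" using dl by simp
        qed
      qed
    qed
  qed
  have Qall: "Q t" if "0 \<le> t" for t using INV[of t] that by blast
  have noinc: "\<forall>u. \<alpha> < u \<and> u < \<beta> \<longrightarrow> TS (\<rho> u) x \<noteq> Incrossing" if "x \<in> Trk" for x
    using assms(12) that by auto
  have noFin: "\<forall>x\<in>Trk. DL (\<rho> t) x \<noteq> Fin t" if t: "\<alpha> \<le> t" "t < \<beta> - Dl" for t
  proof (intro ballI notI)
    fix x assume x: "x \<in> Trk" and d: "DL (\<rho> t) x = Fin t"
    have "Q t" using Qall t assms(9) by simp
    then have "invv (TM x) (IDX x) W t (DL (\<rho> t) x)" using x unfolding Q_def by blast
    then have "invv (TM x) (IDX x) W t (Fin t)" using d by simp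
    then have "\<beta> - dmax + W \<le> t" using late[OF PS[OF x] _ Wlt t(1) _ noinc[OF x]] by blast
    then show False using t Dl by simp
  qed
  have TSal: "TS (\<rho> \<alpha>) x \<noteq> Incrossing" if x: "x \<in> Trk" for x
  proof
    assume inc: "TS (\<rho> \<alpha>) x = Incrossing"
    have "TS (rplus \<rho> \<alpha>) x = Incrossing" using TS_rplus[OF run assms(9)] inc by simp
    then obtain e where e: "e > 0" "\<forall>s. \<alpha> < s \<and> s < \<alpha> + e \<longrightarrow> TS (\<rho> s) x = Incrossing"
      using right_win[OF pre assms(9), of "\<lambda>st. TS st x = Incrossing"] by blast
    define mm where "mm = min e (\<beta> - \<alpha>)"
    define s where "s = \<alpha> + mm / 2"
    have m: "0 < mm" "mm \<le> e" "mm \<le> \<beta> - \<alpha>" using e assms(10) mm_def by auto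
    have s1: "\<alpha> < s" using s_def m by linarith
    have s2: "s < \<alpha> + e" using s_def m by linarith
    have s3: "s < \<beta>" using s_def m by linarith
    note s = s1 s2 s3
    then show False using e noinc[OF x] by blast
  qed
  have safe: "safe_to_open Trk dop (\<rho> \<alpha>) \<alpha>"
    unfolding safe_to_open_def
  proof
    fix x assume x: "x \<in> Trk"
    show "TS (\<rho> \<alpha>) x = Empty \<or> xlt (Fin (\<alpha> + dop)) (DL (\<rho> \<alpha>) x)"
    proof (cases "TS (\<rho> \<alpha>) x")
      case Coming
      show ?thesis
      proof (cases "DL (\<rho> \<alpha>) x")
        case (Fin d)
        have "Q \<alpha>" using Qall assms(9) by simp
        then have "invv (TM x) (IDX x) W \<alpha> (DL (\<rho> \<alpha>) x)" using x unfolding Q_def by blast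
        then have "invv (TM x) (IDX x) W \<alpha> (Fin d)" using Fin by simp
        then have "\<beta> - dmax + W \<le> d" using late[OF PS[OF x] _ Wlt order_refl _ noinc[OF x]] Coming by blast
        then show ?thesis using Fin aD Dl by simp
      qed simp
    qed (use TSal[OF x] in simp_all)
  qed
  have ab: "\<alpha> < \<beta> - Dl" using aD assms(3) by simp
  have cA: "consistent (ctrl_updates Trk dc dop dmin (\<rho> \<alpha>) \<alpha>)" using cons Qall assms(9) by blast
  have DirA: "Dir (rplus \<rho> \<alpha>) = DOpen"
  proof (cases "Dir (\<rho> \<alpha>)")
    case DClose
    have "UDir DOpen \<in> ctrl_updates Trk dc dop dmin (\<rho> \<alpha>) \<alpha>"
      by (rule ctrl_Dir[THEN iffD2]) (use DClose safe in simp)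
    then show ?thesis using Dir_rplus_open[OF run imm assms(9) cA _ DClose] by blast
  next
    case DOpen
    then show ?thesis using Dir_rplus[OF run assms(9) noFin[OF order_refl ab]] by auto
  qed
  obtain e where e: "e > 0" "\<forall>s. \<alpha> < s \<and> s < \<alpha> + e \<longrightarrow> Dir (\<rho> s) = DOpen"
    using right_win[OF pre assms(9), of "\<lambda>st. Dir st = DOpen"] DirA by blast
  define mm where "mm = min e (\<beta> - Dl - \<alpha>)"
  define a0 where "a0 = \<alpha> + mm / 2"
  have m: "0 < mm" "mm \<le> e" "mm \<le> \<beta> - Dl - \<alpha>" using e ab mm_def by auto
  have a01: "\<alpha> < a0" using a0_def m by linarith
  have a02: "a0 < \<alpha> + e" using a0_def m by linarith
  have a03: "a0 < \<beta> - Dl" using a0_def m by linarith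
  note a0 = a01 a02 a03
  have DirI: "\<forall>t. a0 \<le> t \<and> t \<le> \<beta> - Dl \<longrightarrow> Dir (\<rho> t) = DOpen"
  proof (rule time_induct)
    show "a0 \<le> \<beta> - Dl" using a0 by simp
    show "Dir (\<rho> a0) = DOpen" using e a0 by simp
  next
    fix t assume t: "a0 \<le> t" "t < \<beta> - Dl" "Dir (\<rho> t) = DOpen"
    have t0: "0 \<le> t" using t a0 assms(9) by simp
    have "Dir (rplus \<rho> t) = DOpen" using Dir_rplus[OF run t0 noFin] t a0 by auto
    then show "\<exists>e>0. \<forall>s. t < s \<and> s < t + e \<longrightarrow> Dir (\<rho> s) = DOpen"
      using right_win[OF pre t0, of "\<lambda>st. Dir st = DOpen"] by blast
  next
    fix t assume t: "a0 < t" "t \<le> \<beta> - Dl" and H: "\<forall>s. a0 \<le> s \<and> s < t \<longrightarrow> Dir (\<rho> s) = DOpen"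
    have t0: "0 < t" using t a0 assms(9) by simp
    have "Dir (rminus \<rho> t) = DOpen" using left_win[OF pre t0 t(1), of "\<lambda>st. Dir st = DOpen"] H by blast
    then show "Dir (\<rho> t) = DOpen" using internal_rminus[OF run t0] by simp
  qed
  have DirOpen: "Dir (\<rho> s) = DOpen" if "\<alpha> < s" "s \<le> \<beta> - Dl" for s
  proof (cases "s < a0")
    case True then show ?thesis using e a0 that by simp
  next
    case False then show ?thesis using DirI that by simp
  qed
  have "\<not> (\<exists>t\<ge>0. \<forall>u \<in> {t<..<t+dop}. Dir (\<rho> u) = DOpen \<and> GS (\<rho> u) = Closed)"
    using gt unfolding gate_timing_def by blast
  then have "\<not> (\<forall>u \<in> {\<alpha><..<\<alpha>+dop}. Dir (\<rho> u) = DOpen \<and> GS (\<rho> u) = Closed)"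
    using assms(9) by blast
  then obtain u0 where u0': "u0 \<in> {\<alpha><..<\<alpha>+dop}" "\<not> (Dir (\<rho> u0) = DOpen \<and> GS (\<rho> u0) = Closed)" by blast
  then have u0: "\<alpha> < u0" "u0 < \<alpha> + dop" "\<not> (Dir (\<rho> u0) = DOpen \<and> GS (\<rho> u0) = Closed)" by auto
  have "Dir (\<rho> u0) = DOpen" using DirOpen u0 aD by simp
  then have g0: "GS (\<rho> u0) = Opened" using u0(3) by (cases "GS (\<rho> u0)") simp_all
  have GSI: "\<forall>t. u0 \<le> t \<and> t \<le> \<beta> - Dl \<longrightarrow> GS (\<rho> t) = Opened"
  proof (rule time_induct)
    show "u0 \<le> \<beta> - Dl" using u0 aD by simp
    show "GS (\<rho> u0) = Opened" by (rule g0)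
  next
    fix t assume t: "u0 \<le> t" "t < \<beta> - Dl" "GS (\<rho> t) = Opened"
    have t0: "0 \<le> t" using t u0 assms(9) by simp
    have "Dir (\<rho> t) = DOpen" using DirOpen t u0 by simp
    then have "GS (rplus \<rho> t) = Opened" using GS_rplus[OF run t0] t by auto
    then show "\<exists>e>0. \<forall>s. t < s \<and> s < t + e \<longrightarrow> GS (\<rho> s) = Opened"
      using right_win[OF pre t0, of "\<lambda>st. GS st = Opened"] by blast
  next
    fix t assume t: "u0 < t" "t \<le> \<beta> - Dl" and H: "\<forall>s. u0 \<le> s \<and> s < t \<longrightarrow> GS (\<rho> s) = Opened"
    have t0: "0 < t" using t u0 assms(9) by simp
    have "GS (rminus \<rho> t) = Opened" using left_win[OF pre t0 t(1), of "\<lambda>st. GS st = Opened"] H by blast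
    then show "GS (\<rho> t) = Opened" using internal_rminus[OF run t0] by simp
  qed
  show ?thesis
  proof
    fix u assume "u \<in> {\<alpha> + dop .. \<beta> - Delta_close dc dmin dmax}"
    then have "u0 \<le> u" "u \<le> \<beta> - Dl" using u0 Dl_def by auto
    then show "GS (\<rho> u) = Opened" using GSI by blast
  qed
qed

end
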